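(* Let $\kappa=\frac4{27}$ and let the polynomials $e_n(x)$ be defined as in the context. Then for every integer $p\ge0$: $$e_{3p}(x)=\frac{1}{(-\kappa)^{3p}}\sum_{l=0}^p27^l\sum_{k=0}^{\lfloor 3l/2\rfloor}\frac{(-1)^k}{3^k}\binom{p+2l-k}{3l-2k,\ k,\ p-l}\Big(1-\frac{x}{3\kappa}\Big)^k,$$ $$e_{3p+1}(x)=\frac{3}{(-\kappa)^{3p+1}}\sum_{l=0}^p27^l\sum_{k=0}^{\lfloor(3l+1)/2\rfloor}\frac{(-1)^k}{3^k}\binom{p+2l+1-k}{3l+1-2k,\ k,\ p-l}\Big(1-\frac{x}{3\kappa}\Big)^k,$$ $$e_{3p+2}(x)=\frac{9}{(-\kappa)^{3p+2}}\sum_{l=0}^p27^l\sum_{k=0}^{\lfloor 3l/2\rfloor+1}\frac{(-1)^k}{3^k}\binom{p+2l+2-k}{3l+2-2k,\ k,\ p-l}\Big(1-\frac{x}{3\kappa}\Big)^k.$$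
   Context: The polynomials $e_n(x)$, $n\ge0$, are defined by $e_n(x)=(-\kappa)^{-n}\sum_{m_1+2m_2+3m_3=n}(-1)^{m_2}\binom{m_1+m_2+m_3}{m_1,m_2,m_3}3^{m_1+m_2}\big(1-\frac{x}{3\kappa}\big)^{m_2}$, the sum over nonnegative integers $m_1,m_2,m_3$; equivalently, they are the coefficients of the formal power series $\frac{1}{(1+t/\kappa)^3-x\,t^2/\kappa^3}=\sum_{n\ge0}e_n(x)t^n$. Here $\binom{k}{k_1,k_2,k_3}=\frac{k!}{k_1!k_2!k_3!}$ is the trinomial coefficient. *)

theory Defs
  imports Complex_Main
begin

definition trinomial :: "nat \<Rightarrow> nat \<Rightarrow> nat \<Rightarrow> nat \<Rightarrow> real" where
  "trinomial k k1 k2 k3 = fact k / (fact k1 * fact k2 * fact k3)"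

definition e_poly :: "real \<Rightarrow> nat \<Rightarrow> real \<Rightarrow> real" where
  "e_poly \<kappa> n x = (- \<kappa>) powi (- int n) *
     (\<Sum>(m1, m2, m3) \<in> {(m1::nat, m2::nat, m3::nat). m1 + 2 * m2 + 3 * m3 = n}.
        (-1) ^ m2 * trinomial (m1 + m2 + m3) m1 m2 m3 * 3 ^ (m1 + m2) * (1 - x / (3 * \<kappa>)) ^ m2)"

end

theory Submission
  imports Defs
begin

lemma reindex3:
  fixes f :: "nat \<times> nat \<times> nat \<Rightarrow> real"
  assumes "r \<le> 2"
  shows "(\<Sum>m \<in> {(m1::nat, m2::nat, m3::nat). m1 + 2 * m2 + 3 * m3 = 3 * p + r}. f m)
       = (\<Sum>l = 0..p. \<Sum>k = 0..(3 * l + r) div 2. f (3 * l + r - 2 * k, k, p - l))"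
proof -
  let ?A = "SIGMA l:{0..p}. {0..(3 * l + r) div 2}"
  let ?B = "{(m1::nat, m2::nat, m3::nat). m1 + 2 * m2 + 3 * m3 = 3 * p + r}"
  let ?h = "\<lambda>(l, k). (3 * l + r - 2 * k, k, p - l)"
  let ?h' = "\<lambda>(m1::nat, m2::nat, m3::nat). (p - m3, m2)"
  have bij: "bij_betw ?h ?A ?B"
  proof (rule bij_betw_byWitness[where f' = ?h'])
    show "\<forall>a\<in>?A. ?h' (?h a) = a" by auto
    show "\<forall>a\<in>?B. ?h (?h' a) = a" using assms by auto
    show "?h ` ?A \<subseteq> ?B" by auto
    show "?h' ` ?B \<subseteq> ?A" using assms by auto
  qed
  have "(\<Sum>l = 0..p. \<Sum>k = 0..(3 * l + r) div 2. f (3 * l + r - 2 * k, k, p - l))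
      = (\<Sum>a \<in> ?A. f (?h a))"
    by (subst sum.Sigma) (auto simp: case_prod_beta)
  also have "\<dots> = (\<Sum>m \<in> ?B. f m)"
    using sum.reindex_bij_betw[OF bij, of f] by simp
  finally show ?thesis by simp
qed

lemma main_r:
  fixes \<kappa> x :: real and p r :: nat
  assumes "r \<le> 2"
  shows "e_poly \<kappa> (3 * p + r) x = 3 ^ r / (- \<kappa>) ^ (3 * p + r) *
     (\<Sum>l = 0..p. 27 ^ l * (\<Sum>k = 0..(3 * l + r) div 2.
              (-1) ^ k / 3 ^ k * trinomial (p + 2 * l + r - k) (3 * l + r - 2 * k) k (p - l)
              * (1 - x / (3 * \<kappa>)) ^ k))"
proof -
  define y where "y = 1 - x / (3 * \<kappa>)"
  have pw: "(- \<kappa>) powi (- int (3 * p + r)) = 1 / (- \<kappa>) ^ (3 * p + r)"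
  proof -
    have "(- \<kappa>) powi (- int (3 * p + r)) = inverse ((- \<kappa>) powi (int (3 * p + r)))"
      by (rule power_int_minus)
    also have "(- \<kappa>) powi (int (3 * p + r)) = (- \<kappa>) ^ (3 * p + r)"
      by (rule power_int_of_nat)
    finally show ?thesis by (simp add: divide_inverse)
  qed
  have "e_poly \<kappa> (3 * p + r) x = 1 / (- \<kappa>) ^ (3 * p + r) *
     (\<Sum>l = 0..p. \<Sum>k = 0..(3 * l + r) div 2.
        (-1) ^ k * trinomial (3 * l + r - 2 * k + k + (p - l)) (3 * l + r - 2 * k) k (p - l)
          * 3 ^ (3 * l + r - 2 * k + k) * y ^ k)"
    unfolding e_poly_def pw y_def
    by (subst reindex3[OF assms]) simp
  also have "(\<Sum>l = 0..p. \<Sum>k = 0..(3 * l + r) div 2.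
        (-1) ^ k * trinomial (3 * l + r - 2 * k + k + (p - l)) (3 * l + r - 2 * k) k (p - l)
          * 3 ^ (3 * l + r - 2 * k + k) * y ^ k)
    = 3 ^ r * (\<Sum>l = 0..p. 27 ^ l * (\<Sum>k = 0..(3 * l + r) div 2.
              (-1) ^ k / 3 ^ k * trinomial (p + 2 * l + r - k) (3 * l + r - 2 * k) k (p - l)
              * y ^ k))"
    unfolding sum_distrib_left
  proof (rule sum.cong[OF refl], rule sum.cong[OF refl])
    fix l k assume l: "l \<in> {0..p}" and k: "k \<in> {0..(3 * l + r) div 2}"
    have e1: "3 * l + r - 2 * k + k + (p - l) = p + 2 * l + r - k" using l k by auto
    have e2: "3 * l + r - 2 * k + k = 3 * l + r - k" using l k by auto
    have e1': "3 * l + r - k + (p - l) = p + 2 * l + r - k" using l k by auto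
    have e3: "(3::real) ^ (3 * l + r - k) = 3 ^ r * 27 ^ l / 3 ^ k"
    proof -
      have "k \<le> 3 * l + r" using k by auto
      then have "(3::real) ^ (3 * l + r - k) = 3 ^ (3 * l + r) / 3 ^ k"
        by (simp add: power_diff)
      also have "(3::real) ^ (3 * l + r) = 3 ^ r * 27 ^ l"
        by (simp add: power_add power_mult)
      finally show ?thesis .
    qed
    show "(-1) ^ k * trinomial (3 * l + r - 2 * k + k + (p - l)) (3 * l + r - 2 * k) k (p - l)
          * 3 ^ (3 * l + r - 2 * k + k) * y ^ k
        = 3 ^ r * (27 ^ l * ((-1) ^ k / 3 ^ k * trinomial (p + 2 * l + r - k) (3 * l + r - 2 * k) k (p - l)
              * y ^ k))"
      unfolding e1 e2 e3 by (simp add: e1')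
  qed
  finally show ?thesis unfolding y_def by simp
qed

theorem proposition10:
  fixes \<kappa> x :: real and p :: nat
  assumes "\<kappa> = 4 / 27"
  shows "e_poly \<kappa> (3 * p) x =
           1 / (- \<kappa>) ^ (3 * p) *
           (\<Sum>l = 0..p. 27 ^ l * (\<Sum>k = 0..(3 * l) div 2.
              (-1) ^ k / 3 ^ k * trinomial (p + 2 * l - k) (3 * l - 2 * k) k (p - l)
              * (1 - x / (3 * \<kappa>)) ^ k))
       \<and> e_poly \<kappa> (3 * p + 1) x =
           3 / (- \<kappa>) ^ (3 * p + 1) *
           (\<Sum>l = 0..p. 27 ^ l * (\<Sum>k = 0..(3 * l + 1) div 2.
              (-1) ^ k / 3 ^ k * trinomial (p + 2 * l + 1 - k) (3 * l + 1 - 2 * k) k (p - l)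
              * (1 - x / (3 * \<kappa>)) ^ k))
       \<and> e_poly \<kappa> (3 * p + 2) x =
           9 / (- \<kappa>) ^ (3 * p + 2) *
           (\<Sum>l = 0..p. 27 ^ l * (\<Sum>k = 0..(3 * l) div 2 + 1.
              (-1) ^ k / 3 ^ k * trinomial (p + 2 * l + 2 - k) (3 * l + 2 - 2 * k) k (p - l)
              * (1 - x / (3 * \<kappa>)) ^ k))"
proof (intro conjI)
  show "e_poly \<kappa> (3 * p) x =
           1 / (- \<kappa>) ^ (3 * p) *
           (\<Sum>l = 0..p. 27 ^ l * (\<Sum>k = 0..(3 * l) div 2.
              (-1) ^ k / 3 ^ k * trinomial (p + 2 * l - k) (3 * l - 2 * k) k (p - l)
              * (1 - x / (3 * \<kappa>)) ^ k))"
    using main_r[of 0 \<kappa> p x] by simp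
  show "e_poly \<kappa> (3 * p + 1) x =
           3 / (- \<kappa>) ^ (3 * p + 1) *
           (\<Sum>l = 0..p. 27 ^ l * (\<Sum>k = 0..(3 * l + 1) div 2.
              (-1) ^ k / 3 ^ k * trinomial (p + 2 * l + 1 - k) (3 * l + 1 - 2 * k) k (p - l)
              * (1 - x / (3 * \<kappa>)) ^ k))"
    using main_r[of 1 \<kappa> p x] by simp
  have d: "\<And>l::nat. (3 * l + 2) div 2 = 3 * l div 2 + 1" by simp
  show "e_poly \<kappa> (3 * p + 2) x =
           9 / (- \<kappa>) ^ (3 * p + 2) *
           (\<Sum>l = 0..p. 27 ^ l * (\<Sum>k = 0..(3 * l) div 2 + 1.
              (-1) ^ k / 3 ^ k * trinomial (p + 2 * l + 2 - k) (3 * l + 2 - 2 * k) k (p - l)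
              * (1 - x / (3 * \<kappa>)) ^ k))"
    using main_r[of 2 \<kappa> p x] unfolding d by simp
qed

end
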